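(* Let $M$ be a constant symmetric positive definite symplectic $2n\times 2n$ matrix and let $\Gamma_M=\phi_M^{-(Q-2)/4}$. Then $\mathcal L_M\Gamma_M(z)=0$ for all $z\in\mathbb R^{2n+1}\setminus\{0\}$.
   Context: Points of $\mathbb R^{2n+1}$ are written $(x,t)$, $x\in\mathbb R^{2n}$, $t\in\mathbb R$. $J=\begin{pmatrix}0&-\mathbb I_n\\ \mathbb I_n&0\end{pmatrix}$, $Q=2n+2$; $M$ symplectic means $M^{-1}=J^tMJ$. $X_i=\partial_{x_i}+2(Jx)_i\partial_t$ ($i=1,\dots,2n$), $D^2_{\mathbb H}\psi=\big(\tfrac12(X_iX_j+X_jX_i)\psi\big)_{i,j}$, $\mathcal L_M\psi=\mathrm{tr}(MD^2_{\mathbb H}\psi)$, and $\phi_M(x,t)=\langle M^{-1}x,x\rangle^2+t^2$. *)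

theory Defs
  imports "HOL-Analysis.Analysis"
begin

text \<open>Coordinates of R^(2n) are indexed by the type 'n + 'n: Inl k is the k-th of the
first n coordinates, Inr k the k-th of the last n. Points of R^(2n+1) are pairs (x,t).\<close>

definition Jmat :: "real^('n::finite + 'n)^('n + 'n)" where
  "Jmat = (\<chi> i j. case (i, j) of
              (Inl a, Inr b) \<Rightarrow> (if a = b then -1 else 0)
            | (Inr a, Inl b) \<Rightarrow> (if a = b then 1 else 0)
            | _ \<Rightarrow> 0)"

definition symplectic :: "real^('n::finite + 'n)^('n + 'n) \<Rightarrow> bool" where
  "symplectic M \<longleftrightarrow> invertible M \<and> matrix_inv M = transpose Jmat ** M ** Jmat"

definition pos_def :: "real^'m^'m \<Rightarrow> bool" where
  "pos_def M \<longleftrightarrow> (\<forall>x. x \<noteq> 0 \<longrightarrow> x \<bullet> (M *v x) > 0)"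

definition partial_x :: "('n::finite + 'n) \<Rightarrow> ((real^('n + 'n)) \<times> real \<Rightarrow> real)
    \<Rightarrow> (real^('n + 'n)) \<times> real \<Rightarrow> real" where
  "partial_x i \<psi> z = deriv (\<lambda>s. \<psi> (fst z + s *\<^sub>R axis i 1, snd z)) 0"

definition partial_t :: "((real^('n::finite + 'n)) \<times> real \<Rightarrow> real)
    \<Rightarrow> (real^('n + 'n)) \<times> real \<Rightarrow> real" where
  "partial_t \<psi> z = deriv (\<lambda>s. \<psi> (fst z, snd z + s)) 0"

definition Xfield :: "('n::finite + 'n) \<Rightarrow> ((real^('n + 'n)) \<times> real \<Rightarrow> real)
    \<Rightarrow> (real^('n + 'n)) \<times> real \<Rightarrow> real" where
  "Xfield i \<psi> z = partial_x i \<psi> z + 2 * (Jmat *v fst z) $ i * partial_t \<psi> z"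

definition D2H :: "((real^('n::finite + 'n)) \<times> real \<Rightarrow> real)
    \<Rightarrow> (real^('n + 'n)) \<times> real \<Rightarrow> real^('n + 'n)^('n + 'n)" where
  "D2H \<psi> z = (\<chi> i j. (Xfield i (Xfield j \<psi>) z + Xfield j (Xfield i \<psi>) z) / 2)"

definition LM :: "real^('n::finite + 'n)^('n + 'n) \<Rightarrow> ((real^('n + 'n)) \<times> real \<Rightarrow> real)
    \<Rightarrow> (real^('n + 'n)) \<times> real \<Rightarrow> real" where
  "LM M \<psi> z = trace (M ** D2H \<psi> z)"

definition phiM :: "real^('n::finite + 'n)^('n + 'n) \<Rightarrow> (real^('n + 'n)) \<times> real \<Rightarrow> real" where
  "phiM M z = ((matrix_inv M *v fst z) \<bullet> fst z)^2 + (snd z)^2"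

definition Qdim :: "'n::finite itself \<Rightarrow> real" where
  "Qdim _ = 2 * real CARD('n) + 2"

definition GammaM :: "real^('n::finite + 'n)^('n + 'n) \<Rightarrow> (real^('n + 'n)) \<times> real \<Rightarrow> real" where
  "GammaM M z = phiM M z powr (- (Qdim TYPE('n) - 2) / 4)"

end

theory Submission
  imports Defs
begin


lemma inv_facts:
  fixes M :: "real^'m^'m"
  assumes "invertible M"
  shows "M ** matrix_inv M = mat 1" "matrix_inv M ** M = mat 1"
  using someI_ex[OF assms[unfolded invertible_def]] unfolding matrix_inv_def by auto

lemma sym_vm: "transpose A = (A::real^'m^'m) \<Longrightarrow> x v* A = A *v x"
  by (metis vector_transpose_matrix)

lemma qline:
  fixes A :: "real^'m^'m"
  assumes "transpose A = A"
  shows "(A *v (x + s *\<^sub>R axis j 1)) \<bullet> (x + s *\<^sub>R axis j 1)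
     = (A *v x) \<bullet> x + s * (2 * (A *v x) $ j) + s^2 * A $ j $ j"
proof -
  have 1: "(A *v axis j 1) \<bullet> x = (A *v x) $ j"
  proof -
    have "(A *v axis j 1) \<bullet> x = x \<bullet> (A *v axis j 1)" by (rule inner_commute)
    also have "\<dots> = (x v* A) \<bullet> axis j 1" by (rule dot_lmul_matrix[symmetric])
    also have "\<dots> = (A *v x) \<bullet> axis j 1" using sym_vm[OF assms] by simp
    finally show ?thesis by (simp add: inner_axis)
  qed
  have 2: "(A *v axis j 1) \<bullet> axis j 1 = A $ j $ j"
    by (simp add: inner_axis matrix_vector_mult_basis column_def)
  have 3: "(A *v x) \<bullet> axis j 1 = (A *v x) $ j"
    by (simp add: inner_axis)
  show ?thesis
    by (simp add: matrix_vector_right_distrib matrix_vector_mult_scaleR inner_add inner_scaleR_left inner_scaleR_right 1 2 3 algebra_simps power2_eq_square)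
qed

lemma vline:
  fixes A :: "real^'m^'m"
  shows "(A *v (x + s *\<^sub>R axis j 1)) $ i = (A *v x) $ i + s * A $ i $ j"
  by (simp add: matrix_vector_right_distrib matrix_vector_mult_scaleR matrix_vector_mult_basis column_def)



lemma d_powr:
  assumes "(P has_real_derivative P') (at 0)" "P 0 > 0"
  shows "deriv (\<lambda>s. P s powr r) 0 = r * P 0 powr (r-1) * P'"
  using DERIV_fun_powr[OF assms, of r] by (simp add: DERIV_imp_deriv)

lemma d_prod:
  assumes "(P has_real_derivative P') (at 0)" "P 0 > 0" "(L has_real_derivative L') (at 0)"
  shows "deriv (\<lambda>s. c * P s powr r * L s) 0 = c * (r * P 0 powr (r-1) * P' * L 0 + P 0 powr r * L')"
proof -
  have "((\<lambda>s. c * P s powr r * L s) has_real_derivative c * (r * P 0 powr (r-1) * P' * L 0 + P 0 powr r * L')) (at 0)"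
  proof -
    have d1: "((\<lambda>s. P s powr r) has_real_derivative r * P 0 powr (r-1) * P') (at 0)"
      using DERIV_fun_powr[OF assms(1,2), of r] by simp
    show ?thesis using DERIV_mult[OF DERIV_cmult[OF d1, of c] assms(3)]
      by (simp add: algebra_simps)
  qed
  then show ?thesis by (simp add: DERIV_imp_deriv)
qed

lemma ev_pos:
  fixes f :: "real \<Rightarrow> real"
  assumes "continuous_on UNIV f" "f 0 > 0"
  shows "eventually (\<lambda>s. f s > 0) (nhds 0)"
proof -
  have "isCont f 0" using continuous_on_eq_continuous_at[OF open_UNIV, of f] assms(1) by simp
  then have "eventually (\<lambda>s. f s > 0) (at 0)"
    using order_tendstoD(1)[of f "f 0" "at 0" 0] assms(2) by (simp add: isCont_def)
  then show ?thesis using assms(2) by (simp add: eventually_nhds_conv_at)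
qed



definition qA :: "real^'m^'m \<Rightarrow> real^'m \<Rightarrow> real" where "qA A x = (A *v x) \<bullet> x"
definition ph :: "real^'m^'m \<Rightarrow> (real^'m) \<times> real \<Rightarrow> real" where
  "ph A z = (qA A (fst z))^2 + (snd z)^2"
definition Gam :: "real^'m^'m \<Rightarrow> real \<Rightarrow> (real^'m) \<times> real \<Rightarrow> real" where
  "Gam A r z = ph A z powr r"
definition Hf :: "real^('n::finite+'n)^('n+'n) \<Rightarrow> real \<Rightarrow> ('n+'n) \<Rightarrow> (real^('n+'n)) \<times> real \<Rightarrow> real" where
  "Hf A r i z = r * ph A z powr (r-1) * (4*qA A (fst z) * (A *v fst z)$i + 4 * snd z*(Jmat *v fst z)$i)"

lemma ph_xline: "transpose A = A \<Longrightarrow> ph A (x + s *\<^sub>R axis j 1, t) = (qA A x + s*(2*(A*v x)$j) + s^2*A$j$j)^2 + t^2"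
  by (simp add: ph_def qA_def qline)

lemma ph_tline: "ph A (x, t + s) = (qA A x)^2 + (t+s)^2"
  by (simp add: ph_def)

lemma PX_Gam:
  fixes A :: "real^('n::finite+'n)^('n+'n)"
  assumes "transpose A = A" "ph A (x,t) > 0"
  shows "partial_x j (Gam A r) (x,t) = r * ph A (x,t) powr (r-1) * (2*qA A x*(2*(A*v x)$j))"
proof -
  have e: "(\<lambda>s. Gam A r (fst (x,t) + s *\<^sub>R axis j 1, snd (x,t))) = (\<lambda>s. ((qA A x + s*(2*(A*v x)$j) + s^2*A$j$j)^2 + t^2) powr r)"
    by (simp add: Gam_def ph_xline[OF assms(1)])
  have d: "((\<lambda>s. (qA A x + s*(2*(A*v x)$j) + s^2*A$j$j)^2 + t^2) has_real_derivative 2*qA A x*(2*(A*v x)$j)) (at 0)"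
    by (auto intro!: derivative_eq_intros)
  show ?thesis unfolding partial_x_def e
    using d_powr[OF d] assms(2) by (simp add: ph_def)
qed

lemma PT_Gam:
  fixes A :: "real^('n::finite+'n)^('n+'n)"
  assumes "ph A (x,t) > 0"
  shows "partial_t (Gam A r) (x,t) = r * ph A (x,t) powr (r-1) * (2*t)"
proof -
  have e: "(\<lambda>s. Gam A r (fst (x,t), snd (x,t) + s)) = (\<lambda>s. ((qA A x)^2 + (t+s)^2) powr r)"
    by (simp add: Gam_def ph_tline)
  have d: "((\<lambda>s. (qA A x)^2 + (t+s)^2) has_real_derivative 2*t) (at 0)"
    by (auto intro!: derivative_eq_intros)
  show ?thesis unfolding partial_t_def e
    using d_powr[OF d] assms by (simp add: ph_def)
qed

lemma X_Gam:
  fixes A :: "real^('n::finite+'n)^('n+'n)"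
  assumes "transpose A = A" "ph A (x,t) > 0"
  shows "Xfield i (Gam A r) (x,t) = Hf A r i (x,t)"
  unfolding Xfield_def PX_Gam[OF assms] PT_Gam[OF assms(2)] Hf_def
  by (simp add: algebra_simps)

lemma PX_H:
  fixes A :: "real^('n::finite+'n)^('n+'n)"
  assumes "transpose A = A" "ph A (x,t) > 0"
  shows "partial_x j (Hf A r i) (x,t) = r * ((r-1) * ph A (x,t) powr (r-1-1) * (2*qA A x*(2*(A*v x)$j))
      * (4*qA A x * (A *v x)$i + 4*t*(Jmat *v x)$i)
     + ph A (x,t) powr (r-1) * (4*(2*(A*v x)$j*(A *v x)$i + qA A x * A$i$j) + 4*t*Jmat$i$j))"
proof -
  have e: "(\<lambda>s. Hf A r i (fst (x,t) + s *\<^sub>R axis j 1, snd (x,t))) = (\<lambda>s. r * ((qA A x + s*(2*(A*v x)$j) + s^2*A$j$j)^2 + t^2) powr (r-1)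
     * (4*(qA A x + s*(2*(A*v x)$j) + s^2*A$j$j) * ((A *v x)$i + s * A$i$j) + 4*t*((Jmat *v x)$i + s*Jmat$i$j)))"
    by (simp add: Hf_def ph_xline[OF assms(1)] qline[OF assms(1)] vline qA_def)
  have d: "((\<lambda>s. (qA A x + s*(2*(A*v x)$j) + s^2*A$j$j)^2 + t^2) has_real_derivative 2*qA A x*(2*(A*v x)$j)) (at 0)"
    by (auto intro!: derivative_eq_intros)
  have d2: "((\<lambda>s. 4*(qA A x + s*(2*(A*v x)$j) + s^2*A$j$j) * ((A *v x)$i + s * A$i$j) + 4*t*((Jmat *v x)$i + s*Jmat$i$j))
      has_real_derivative (4*(2*(A*v x)$j*(A *v x)$i + qA A x * A$i$j) + 4*t*Jmat$i$j)) (at 0)"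
    by (auto intro!: derivative_eq_intros simp: algebra_simps)
  show ?thesis unfolding partial_x_def e
    using d_prod[OF d _ d2, of r "r-1"] assms(2) by (simp add: ph_def)
qed

lemma PT_H:
  fixes A :: "real^('n::finite+'n)^('n+'n)"
  assumes "ph A (x,t) > 0"
  shows "partial_t (Hf A r i) (x,t) = r * ((r-1) * ph A (x,t) powr (r-1-1) * (2*t)
      * (4*qA A x * (A *v x)$i + 4*t*(Jmat *v x)$i)
     + ph A (x,t) powr (r-1) * (4*(Jmat *v x)$i))"
proof -
  have e: "(\<lambda>s. Hf A r i (fst (x,t), snd (x,t) + s)) = (\<lambda>s. r * ((qA A x)^2 + (t+s)^2) powr (r-1)
     * (4*qA A x * (A *v x)$i + 4*(t+s)*(Jmat *v x)$i))"
    by (simp add: Hf_def ph_tline)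
  have d: "((\<lambda>s. (qA A x)^2 + (t+s)^2) has_real_derivative 2*t) (at 0)"
    by (auto intro!: derivative_eq_intros)
  have d2: "((\<lambda>s. 4*qA A x * (A *v x)$i + 4*(t+s)*(Jmat *v x)$i) has_real_derivative 4*(Jmat *v x)$i) (at 0)"
    by (auto intro!: derivative_eq_intros)
  show ?thesis unfolding partial_t_def e
    using d_prod[OF d _ d2, of r "r-1"] assms by (simp add: ph_def)
qed


lemma XX_Gam:
  fixes A :: "real^('n::finite+'n)^('n+'n)"
  assumes "transpose A = A" "ph A (x,t) > 0"
  shows "Xfield j (Xfield i (Gam A r)) (x,t) = Xfield j (Hf A r i) (x,t)"
proof -
  have c1: "continuous_on UNIV (\<lambda>s. ph A (x + s *\<^sub>R axis j 1, t))"
    unfolding ph_xline[OF assms(1)] by (intro continuous_intros)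
  have ev1: "eventually (\<lambda>s. Xfield i (Gam A r) (x + s *\<^sub>R axis j 1, t) = Hf A r i (x + s *\<^sub>R axis j 1, t)) (nhds 0)"
    using ev_pos[OF c1] assms(2) by (auto elim!: eventually_mono intro: X_Gam[OF assms(1)])
  have c2: "continuous_on UNIV (\<lambda>s. ph A (x, t + s))"
    unfolding ph_tline by (intro continuous_intros)
  have ev2: "eventually (\<lambda>s. Xfield i (Gam A r) (x, t + s) = Hf A r i (x, t + s)) (nhds 0)"
    using ev_pos[OF c2] assms(2) by (auto elim!: eventually_mono intro: X_Gam[OF assms(1)])
  have "partial_x j (Xfield i (Gam A r)) (x,t) = partial_x j (Hf A r i) (x,t)"
    unfolding partial_x_def fst_conv snd_conv by (rule deriv_cong_ev[OF ev1 refl])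
  moreover have "partial_t (Xfield i (Gam A r)) (x,t) = partial_t (Hf A r i) (x,t)"
    unfolding partial_t_def fst_conv snd_conv by (rule deriv_cong_ev[OF ev2 refl])
  ultimately show ?thesis by (simp add: Xfield_def)
qed

lemma J_anti: "Jmat$j$i = - Jmat$i$j"
  by (cases i; cases j) (simp_all add: Jmat_def)

lemma sum_plus_univ: "(\<Sum>i\<in>(UNIV::('n::finite+'n) set). f i) = (\<Sum>a\<in>UNIV. f (Inl a)) + (\<Sum>a\<in>UNIV. f (Inr a))"
  by (subst UNIV_Plus_UNIV[symmetric], subst sum.Plus) (simp_all add: o_def)

lemma Jx_Inl: "(Jmat *v x) $ Inl a = - x $ Inr a"
  unfolding matrix_vector_mult_def
  by (simp add: sum_plus_univ Jmat_def if_distrib[of "\<lambda>c. c * _"] cong: if_cong)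

lemma Jx_Inr: "(Jmat *v x) $ Inr a = x $ Inl a"
  unfolding matrix_vector_mult_def
  by (simp add: sum_plus_univ Jmat_def if_distrib[of "\<lambda>c. c * _"] cong: if_cong)

lemma x_Jx: "x \<bullet> (Jmat *v (x::real^('n::finite+'n))) = 0"
  unfolding inner_vec_def
  by (simp add: sum_plus_univ Jx_Inl Jx_Inr sum_negf algebra_simps)

lemma card_plus: "CARD('n::finite + 'n) = 2 * CARD('n)"
  by (subst UNIV_Plus_UNIV[symmetric], subst card_Plus) simp_all

lemma XX_form:
  fixes A :: "real^('n::finite+'n)^('n+'n)"
  assumes "transpose A = A" "ph A (x,t) > 0"
  shows "Xfield j (Xfield i (Gam A r)) (x,t) =
     r*(r-1)*ph A (x,t) powr (r-1-1) * (4*qA A x*(A *v x)$j + 4*t*(Jmat *v x)$j) * (4*qA A x*(A *v x)$i + 4*t*(Jmat *v x)$i)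
   + r*ph A (x,t) powr (r-1) * (8*(A *v x)$j*(A *v x)$i + 4*qA A x*A$i$j + 4*t*Jmat$i$j + 8*(Jmat *v x)$j*(Jmat *v x)$i)"
  apply (subst XX_Gam[OF assms])
  apply (simp only: Xfield_def PX_H[OF assms] PT_H[OF assms(2)] fst_conv)
  apply (simp add: algebra_simps)
  done

definition outer :: "real^'m \<Rightarrow> real^'m \<Rightarrow> real^'m^'m" where
  "outer u v = (\<chi> i j. u$i * v$j)"

lemma tr_outer: "trace (M ** outer u v) = v \<bullet> (M *v u)"
  unfolding trace_def outer_def matrix_matrix_mult_def inner_vec_def matrix_vector_mult_def
  by (simp add: sum_distrib_left algebra_simps)

lemma tr_add: "trace (M ** (X + Y)) = trace (M ** X) + trace (M ** (Y::real^'m^'m))"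
  by (simp add: matrix_add_ldistrib trace_add)

lemma tr_scale: "trace (M ** (c *\<^sub>R X)) = c * trace (M ** (X::real^'m^'m))"
  unfolding trace_def matrix_matrix_mult_def
  by (simp add: sum_distrib_left algebra_simps)

lemma powr_m1: "P > 0 \<Longrightarrow> P powr (r - 1 - 1) * P = P powr (r - (1::real))"
proof -
  assume "P > 0"
  have "P powr (r - 1 - 1) * P = P powr (r - 1 - 1) * P powr 1" using \<open>P > 0\<close> by simp
  also have "\<dots> = P powr (r - 1 - 1 + 1)" by (simp only: powr_add)
  also have "r - 1 - 1 + 1 = r - 1" by simp
  finally show ?thesis .
qed

theorem mainTheorem3:
  fixes M :: "real^('n::finite + 'n)^('n + 'n)"
  assumes "transpose M = M" and "pos_def M" and "symplectic M"
  shows "\<forall>z. z \<noteq> 0 \<longrightarrow> LM M (GammaM M) z = 0"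
proof (intro allI impI)
  fix z :: "(real^('n+'n)) \<times> real"
  assume z0: "z \<noteq> 0"
  obtain x t where zxt: "z = (x,t)" by (cases z)
  define A where "A = matrix_inv M"
  define J where "J = (Jmat :: real^('n+'n)^('n+'n))"
  have invM: "invertible M" and AJ: "A = transpose J ** M ** J"
    using assms(3) unfolding symplectic_def A_def J_def by auto
  have MA: "M ** A = mat 1" using inv_facts(1)[OF invM] A_def by simp
  have Asym: "transpose A = A"
    unfolding AJ by (simp add: matrix_transpose_mul assms(1) matrix_mul_assoc)
  define r :: real where "r = - (Qdim TYPE('n) - 2) / 4"
  have Gdef: "GammaM M = Gam A r"
    by (rule ext) (simp add: GammaM_def Gam_def phiM_def ph_def qA_def A_def r_def)
  define q where "q = qA A x"
  define a where "a = A *v x"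
  define b where "b = J *v x"
  define P where "P = ph A (x,t)"
  have qpos: "x \<noteq> 0 \<Longrightarrow> q > 0"
  proof -
    assume x0: "x \<noteq> 0"
    have "M *v a = x" unfolding a_def by (simp add: matrix_vector_mul_assoc MA)
    then have a0: "a \<noteq> 0" using x0 by auto
    have "q = a \<bullet> (M *v a)" using \<open>M *v a = x\<close> by (simp add: q_def qA_def a_def)
    then show "q > 0" using assms(2) a0 unfolding pos_def_def by auto
  qed
  have Ppos: "P > 0"
  proof (cases "x = 0")
    case True
    then have "t \<noteq> 0" using z0 zxt by (auto simp: zero_prod_def)
    then show ?thesis by (simp add: P_def ph_def sum_power2_gt_zero_iff)
  next
    case False
    then show ?thesis using qpos by (simp add: P_def ph_def q_def add_pos_nonneg)
  qed
  define g where "g = (4*q) *\<^sub>R a + (4*t) *\<^sub>R b"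
  define c1 where "c1 = r * (r-1) * P powr (r-1-1)"
  define c2 where "c2 = r * P powr (r-1)"
  have D: "D2H (Gam A r) (x,t) = c1 *\<^sub>R outer g g + c2 *\<^sub>R (8 *\<^sub>R outer a a + (4*q) *\<^sub>R A + 8 *\<^sub>R outer b b)"
  proof -
    have "D2H (Gam A r) (x,t) $ i $ j = (c1 *\<^sub>R outer g g + c2 *\<^sub>R (8 *\<^sub>R outer a a + (4*q) *\<^sub>R A + 8 *\<^sub>R outer b b)) $ i $ j" for i j
    proof -
      have Aij: "A$j$i = A$i$j" using arg_cong[OF Asym, of "\<lambda>X. X$i$j"] by (simp add: transpose_def)
      show ?thesis
        unfolding D2H_def vec_lambda_beta XX_form[OF Asym Ppos[unfolded P_def]]
        by (simp add: outer_def g_def c1_def c2_def a_def b_def q_def J_def P_def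
            J_anti[of i j] Aij field_simps)
    qed
    then show ?thesis by (simp add: vec_eq_iff)
  qed
  have MAx: "M *v a = x" unfolding a_def by (simp add: matrix_vector_mul_assoc MA)
  have xb: "x \<bullet> b = 0" unfolding b_def J_def by (rule x_Jx)
  have aMa: "a \<bullet> (M *v a) = q" using MAx by (simp add: q_def qA_def a_def)
  have bMa: "b \<bullet> (M *v a) = 0" using MAx xb by (simp add: inner_commute)
  have aMb: "a \<bullet> (M *v b) = 0"
  proof -
    have "a \<bullet> (M *v b) = (a v* M) \<bullet> b" by (rule dot_lmul_matrix[symmetric])
    also have "a v* M = M *v a" using vector_transpose_matrix[of a M] assms(1) by simp
    finally show ?thesis using MAx xb by simp
  qed
  have bMb: "b \<bullet> (M *v b) = q"
  proof -
    have "b = x v* transpose J" unfolding b_def by simp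
    then have "b \<bullet> (M *v b) = (x v* transpose J) \<bullet> (M *v b)" by simp
    also have "\<dots> = x \<bullet> (transpose J *v (M *v b))" by (rule dot_lmul_matrix)
    also have "\<dots> = x \<bullet> (A *v x)"
      by (simp add: AJ matrix_vector_mul_assoc matrix_mul_assoc b_def del: transpose_matrix_vector)
    finally show ?thesis by (simp add: q_def qA_def inner_commute)
  qed
  have gMg: "g \<bullet> (M *v g) = 16 * q * P"
  proof -
    have "g \<bullet> (M *v g) = 16*q*q * (a \<bullet> (M *v a)) + 16*q*t*(a \<bullet> (M *v b)) + 16*t*q*(b \<bullet> (M *v a)) + 16*t*t*(b \<bullet> (M *v b))"
      unfolding g_def by (simp add: matrix_vector_right_distrib matrix_vector_mult_scaleR inner_add inner_scaleR_left inner_scaleR_right algebra_simps)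
    also have "\<dots> = 16 * q * P" by (simp add: aMa aMb bMa bMb P_def ph_def q_def power2_eq_square algebra_simps)
    finally show ?thesis .
  qed
  have trA: "trace (M ** A) = 2 * real CARD('n)"
    using MA by (simp add: trace_I card_plus)
  have "LM M (GammaM M) z = trace (M ** D2H (Gam A r) (x,t))"
    by (simp add: LM_def Gdef zxt)
  also have "\<dots> = c1 * (16 * q * P) + c2 * (8 * q + 4*q * (2 * real CARD('n)) + 8 * q)"
    unfolding D by (simp add: tr_add tr_scale tr_outer gMg aMa bMb trA)
  also have "\<dots> = 0"
  proof -
    have "c1 * P = r * (r-1) * (P powr (r-1-1) * P)" by (simp add: c1_def mult.assoc)
    also have "\<dots> = r * (r-1) * P powr (r-1)" by (simp only: powr_m1[OF Ppos])
    also have "\<dots> = (r-1) * c2" by (simp add: c2_def)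
    finally have h: "c1 * P = (r-1) * c2" .
    have hr: "r = - real CARD('n) / 2" by (simp add: r_def Qdim_def)
    have "c1 * (16 * q * P) + c2 * (8 * q + 4*q * (2 * real CARD('n)) + 8 * q)
       = 16 * q * (c1 * P) + c2 * (8 * q + 4*q * (2 * real CARD('n)) + 8 * q)" by (simp only: algebra_simps)
    also have "\<dots> = 16 * q * ((r-1) * c2) + c2 * (8 * q + 4*q * (2 * real CARD('n)) + 8 * q)" by (simp only: h)
    also have "\<dots> = q * c2 * (16 * r + 8 * real CARD('n))" by (simp add: algebra_simps)
    also have "\<dots> = 0" by (simp add: hr)
    finally show ?thesis .
  qed
  finally show "LM M (GammaM M) z = 0" .
qed
end
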